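(* Let $n\geq 1$ and $N > n$, and consider the operator on symmetric polynomials in $x_1,\ldots,x_N$ $$D^\ast = \sum_{i=1}^N x_i^2\frac{\partial^2}{\partial x_i^2} + \sum_{i\neq j}\frac{1}{x_i-x_j}\left(x_i^2\frac{\partial}{\partial x_i} - x_j^2\frac{\partial}{\partial x_j}\right).$$ Then for every $\sigma\in P(n)$, $$\tfrac12 D^\ast(p_\sigma) = n(N-1)\,p_\sigma + \sum_{\lambda\in P(n)} (A_n)_{\sigma\lambda}\, p_\lambda;$$ that is, the matrix of $\frac12 D^\ast$ on the span of $\{p_\lambda\}_{\lambda\in P(n)}$ with respect to this basis (columns giving the coordinates of the images of basis vectors) is $A_n^T + n(N-1)I$.
   Context: $P(n)$ is the set of partitions of $n$. $p_r = \sum_{i=1}^N x_i^r$ and, for $\lambda = 1^{k_1}2^{k_2}\cdots$, $p_\lambda = p_1^{k_1}p_2^{k_2}\cdots$ (power sum symmetric polynomials). $A_n$ is the square matrix indexed by $P(n)$ whose $(\lambda,\sigma)$ entry is the number of transpositions $\tau\in S_n$ such that $\tau\alpha$ has cycle type $\sigma$, where $\alpha$ is any fixed permutation of cycle type $\lambda$. *)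

theory Defs
  imports "HOL-Analysis.Analysis" "HOL-Library.Multiset" "HOL-Combinatorics.Combinatorics"
begin

definition partitions :: "nat \<Rightarrow> nat multiset set" where
  "partitions n = {lam. (\<forall>k\<in>#lam. 0 < k) \<and> sum_mset lam = n}"

definition psum :: "nat \<Rightarrow> nat \<Rightarrow> (nat \<Rightarrow> real) \<Rightarrow> real" where
  "psum N r x = (\<Sum>i<N. x i ^ r)"

definition ppart :: "nat \<Rightarrow> nat multiset \<Rightarrow> (nat \<Rightarrow> real) \<Rightarrow> real" where
  "ppart N lam x = prod_mset (image_mset (\<lambda>r. psum N r x) lam)"

definition partial :: "nat \<Rightarrow> ((nat \<Rightarrow> real) \<Rightarrow> real) \<Rightarrow> (nat \<Rightarrow> real) \<Rightarrow> real" where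
  "partial i f x = deriv (\<lambda>t. f (x(i := t))) (x i)"

text \<open>The operator D^* (applied at points with pairwise distinct coordinates).\<close>
definition Dstar :: "nat \<Rightarrow> ((nat \<Rightarrow> real) \<Rightarrow> real) \<Rightarrow> (nat \<Rightarrow> real) \<Rightarrow> real" where
  "Dstar N f x =
     (\<Sum>i<N. x i ^ 2 * partial i (partial i f) x)
   + (\<Sum>i<N. \<Sum>j<N. if i \<noteq> j
        then (x i ^ 2 * partial i f x - x j ^ 2 * partial j f x) / (x i - x j) else 0)"

definition orbit_of :: "(nat \<Rightarrow> nat) \<Rightarrow> nat \<Rightarrow> nat set" where
  "orbit_of \<alpha> x = {(\<alpha> ^^ k) x | k. True}"

definition cycle_type :: "nat \<Rightarrow> (nat \<Rightarrow> nat) \<Rightarrow> nat multiset" where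
  "cycle_type n \<alpha> = image_mset card (mset_set (orbit_of \<alpha> ` {..<n}))"

definition A_mat :: "nat \<Rightarrow> nat multiset \<Rightarrow> nat multiset \<Rightarrow> nat" where
  "A_mat n lam sig =
     (let \<alpha> = (SOME \<alpha>. \<alpha> permutes {..<n} \<and> cycle_type n \<alpha> = lam)
      in card {(a, b). a < b \<and> b < n \<and> cycle_type n (Transposition.transpose a b \<circ> \<alpha>) = sig})"

end

theory Submission
  imports Defs
begin


definition PP :: "nat \<Rightarrow> 'j set \<Rightarrow> ('j \<Rightarrow> nat) \<Rightarrow> (nat \<Rightarrow> real) \<Rightarrow> real" where
  "PP N J g y = (\<Prod>j\<in>J. psum N (g j) y)"

lemma psum_upd:
  assumes "i < N"
  shows "psum N r (y(i:=t)) = (\<Sum>l\<in>{..<N}-{i}. y l ^ r) + t ^ r"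
proof -
  have "psum N r (y(i:=t)) = (y(i:=t)) i ^ r + (\<Sum>l\<in>{..<N}-{i}. (y(i:=t)) l ^ r)"
    unfolding psum_def using assms by (subst sum.remove[of _ i]) auto
  also have "(\<Sum>l\<in>{..<N}-{i}. (y(i:=t)) l ^ r) = (\<Sum>l\<in>{..<N}-{i}. y l ^ r)"
    by (rule sum.cong) auto
  finally show ?thesis by (simp only: fun_upd_same add.commute)
qed

lemma psum_deriv:
  assumes "i < N"
  shows "((\<lambda>t. psum N r (y(i:=t))) has_field_derivative (real r * t ^ (r - 1))) (at t)"
  unfolding psum_upd[OF assms]
  by (auto intro!: derivative_eq_intros)

lemma PP_deriv:
  assumes "i < N"
  shows "((\<lambda>t. PP N J g (y(i:=t))) has_field_derivative
     (\<Sum>j\<in>J. real (g j) * t ^ (g j - 1) * (\<Prod>l\<in>J-{j}. psum N (g l) (y(i:=t))))) (at t)"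
  unfolding PP_def
  using has_field_derivative_prod[of J "\<lambda>j t. psum N (g j) (y(i:=t))" "\<lambda>j. real (g j) * t ^ (g j - 1)" t]
    psum_deriv[OF assms] by simp

lemma partial_PP:
  assumes "i < N"
  shows "partial i (PP N J g) z = (\<Sum>j\<in>J. real (g j) * z i ^ (g j - 1) * (\<Prod>l\<in>J-{j}. psum N (g l) z))"
proof -
  have "partial i (PP N J g) z = (\<Sum>j\<in>J. real (g j) * z i ^ (g j - 1) * (\<Prod>l\<in>J-{j}. psum N (g l) (z(i:=z i))))"
    unfolding partial_def by (rule DERIV_imp_deriv[OF PP_deriv[OF assms]])
  then show ?thesis by simp
qed

lemma partial2_PP:
  assumes "i < N"
  shows "partial i (partial i (PP N J g)) y = (\<Sum>j\<in>J.
     real (g j) * (real (g j - 1) * y i ^ (g j - 1 - 1)) * (\<Prod>l\<in>J-{j}. psum N (g l) y)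
   + real (g j) * y i ^ (g j - 1) * (\<Sum>l\<in>J-{j}. real (g l) * y i ^ (g l - 1) * (\<Prod>m\<in>J-{j}-{l}. psum N (g m) y)))"
proof -
  have eq: "(\<lambda>t. partial i (PP N J g) (y(i:=t))) = (\<lambda>t. \<Sum>j\<in>J. real (g j) * t ^ (g j - 1) * PP N (J-{j}) g (y(i:=t)))"
    by (rule ext, subst partial_PP[OF assms]) (simp add: PP_def)
  have "((\<lambda>t. partial i (PP N J g) (y(i:=t))) has_field_derivative (\<Sum>j\<in>J.
     real (g j) * (real (g j - 1) * t ^ (g j - 1 - 1)) * PP N (J-{j}) g (y(i:=t))
   + real (g j) * t ^ (g j - 1) * (\<Sum>l\<in>J-{j}. real (g l) * t ^ (g l - 1) * (\<Prod>m\<in>J-{j}-{l}. psum N (g m) (y(i:=t)))))) (at t)" for t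
    unfolding eq
  proof (intro DERIV_sum)
    fix j assume "j \<in> J"
    have d1: "((\<lambda>t. real (g j) * t ^ (g j - 1)) has_field_derivative real (g j) * (real (g j - 1) * t ^ (g j - 1 - 1))) (at t)"
      by (intro DERIV_cmult) (use DERIV_pow[of "g j - 1" t] in simp)
    show "((\<lambda>t. real (g j) * t ^ (g j - 1) * PP N (J-{j}) g (y(i:=t))) has_field_derivative
       real (g j) * (real (g j - 1) * t ^ (g j - 1 - 1)) * PP N (J-{j}) g (y(i:=t))
   + real (g j) * t ^ (g j - 1) * (\<Sum>l\<in>J-{j}. real (g l) * t ^ (g l - 1) * (\<Prod>m\<in>J-{j}-{l}. psum N (g m) (y(i:=t))))) (at t)"
      using DERIV_mult[OF d1 PP_deriv[OF assms, of "J-{j}" g y t]] by (simp add: algebra_simps)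
  qed
  from DERIV_imp_deriv[OF this[of "y i"]] show ?thesis
    unfolding partial_def[of i "partial i (PP N J g)"] by (simp add: PP_def)
qed

lemma Dstar_part1:
  assumes "\<forall>j\<in>J. g j \<ge> 1"
  shows "(\<Sum>i<N. y i ^ 2 * partial i (partial i (PP N J g)) y) =
    (\<Sum>j\<in>J. real (g j) * (real (g j) - 1) * psum N (g j) y * PP N (J-{j}) g y
       + (\<Sum>l\<in>J-{j}. real (g j) * real (g l) * psum N (g j + g l) y * PP N (J-{j}-{l}) g y))"
  (is "_ = ?RR")
proof -
  have A: "y i ^ 2 * partial i (partial i (PP N J g)) y = (\<Sum>j\<in>J. real (g j) * (real (g j) - 1) * y i ^ (g j) * PP N (J-{j}) g y
       + (\<Sum>l\<in>J-{j}. real (g j) * real (g l) * y i ^ (g j + g l) * PP N (J-{j}-{l}) g y))" (is "_ = ?R") if "i < N" for i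
  proof -
    have "y i ^ 2 * partial i (partial i (PP N J g)) y = (\<Sum>j\<in>J. y i ^ 2 * (
     real (g j) * (real (g j - 1) * y i ^ (g j - 1 - 1)) * (\<Prod>l\<in>J-{j}. psum N (g l) y)
   + real (g j) * y i ^ (g j - 1) * (\<Sum>l\<in>J-{j}. real (g l) * y i ^ (g l - 1) * (\<Prod>m\<in>J-{j}-{l}. psum N (g m) y))))"
      by (simp add: partial2_PP[OF that] sum_distrib_left)
    also have "\<dots> = ?R"
    proof (rule sum.cong[OF refl])
      fix j assume j: "j \<in> J"
      have e1: "y i ^ 2 * (real (g j) * (real (g j - 1) * y i ^ (g j - 1 - 1))) = real (g j) * (real (g j) - 1) * y i ^ (g j)"
      proof (cases "g j = 1")
        case True then show ?thesis by simp
      next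
        case False
        with assms j have "g j \<ge> 2" by force
        then have "g j = Suc (Suc (g j - 1 - 1))" by arith
        then have "y i ^ g j = y i ^ 2 * y i ^ (g j - 1 - 1)" by (metis power_add add_2_eq_Suc)
        with \<open>g j \<ge> 2\<close> show ?thesis by (simp add: of_nat_diff)
      qed
      have e2: "y i ^ 2 * (real (g j) * y i ^ (g j - 1) * (real (g l) * y i ^ (g l - 1) * X)) = real (g j) * real (g l) * y i ^ (g j + g l) * X"
        if "l \<in> J" for l X
      proof -
        have "g j \<ge> 1" "g l \<ge> 1" using assms j that by auto
        then obtain a b where ab: "g j = Suc a" "g l = Suc b" by (metis Suc_pred' less_le_trans zero_less_one)
        then have "y i ^ (g j + g l) = y i ^ 2 * y i ^ (g j - 1) * y i ^ (g l - 1)"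
          by (simp add: power_add power2_eq_square)
        then show ?thesis by simp
      qed
      show "y i ^ 2 * (
     real (g j) * (real (g j - 1) * y i ^ (g j - 1 - 1)) * (\<Prod>l\<in>J-{j}. psum N (g l) y)
   + real (g j) * y i ^ (g j - 1) * (\<Sum>l\<in>J-{j}. real (g l) * y i ^ (g l - 1) * (\<Prod>m\<in>J-{j}-{l}. psum N (g m) y))) =
     real (g j) * (real (g j) - 1) * y i ^ (g j) * PP N (J-{j}) g y
       + (\<Sum>l\<in>J-{j}. real (g j) * real (g l) * y i ^ (g j + g l) * PP N (J-{j}-{l}) g y)"
        unfolding distrib_left PP_def
      proof (rule arg_cong2[where f="(+)"])
        show "y i ^ 2 * (real (g j) * (real (g j - 1) * y i ^ (g j - 1 - 1)) * (\<Prod>l\<in>J-{j}. psum N (g l) y)) =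
          real (g j) * (real (g j) - 1) * y i ^ (g j) * (\<Prod>l\<in>J-{j}. psum N (g l) y)"
          by (metis e1 mult.assoc)
        show "y i ^ 2 * (real (g j) * y i ^ (g j - 1) * (\<Sum>l\<in>J-{j}. real (g l) * y i ^ (g l - 1) * (\<Prod>m\<in>J-{j}-{l}. psum N (g m) y))) =
          (\<Sum>l\<in>J-{j}. real (g j) * real (g l) * y i ^ (g j + g l) * (\<Prod>m\<in>J-{j}-{l}. psum N (g m) y))"
          unfolding sum_distrib_left
          by (rule sum.cong[OF refl]) (metis e2 DiffD1 mult.assoc)
      qed
    qed
    finally show ?thesis .
  qed
  have "(\<Sum>i<N. y i ^ 2 * partial i (partial i (PP N J g)) y) =
     (\<Sum>i<N. \<Sum>j\<in>J. real (g j) * (real (g j) - 1) * y i ^ (g j) * PP N (J-{j}) g y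
       + (\<Sum>l\<in>J-{j}. real (g j) * real (g l) * y i ^ (g j + g l) * PP N (J-{j}-{l}) g y))"
    using A by (intro sum.cong) auto
  also have "\<dots> = (\<Sum>j\<in>J. \<Sum>i<N. real (g j) * (real (g j) - 1) * y i ^ (g j) * PP N (J-{j}) g y
       + (\<Sum>l\<in>J-{j}. real (g j) * real (g l) * y i ^ (g j + g l) * PP N (J-{j}-{l}) g y))"
    by (rule sum.swap)
  also have "\<dots> = ?RR"
  proof (rule sum.cong[OF refl])
    fix j
    have "(\<Sum>i<N. \<Sum>l\<in>J-{j}. real (g j) * real (g l) * y i ^ (g j + g l) * PP N (J-{j}-{l}) g y)
       = (\<Sum>l\<in>J-{j}. \<Sum>i<N. real (g j) * real (g l) * y i ^ (g j + g l) * PP N (J-{j}-{l}) g y)"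
      by (rule sum.swap)
    also have "\<dots> = (\<Sum>l\<in>J-{j}. real (g j) * real (g l) * psum N (g j + g l) y * PP N (J-{j}-{l}) g y)"
      unfolding psum_def by (intro sum.cong refl) (simp add: sum_distrib_left sum_distrib_right)
    finally have 1: "(\<Sum>i<N. \<Sum>l\<in>J-{j}. real (g j) * real (g l) * y i ^ (g j + g l) * PP N (J-{j}-{l}) g y)
       = (\<Sum>l\<in>J-{j}. real (g j) * real (g l) * psum N (g j + g l) y * PP N (J-{j}-{l}) g y)" .
    have 2: "(\<Sum>i<N. real (g j) * (real (g j) - 1) * y i ^ (g j) * PP N (J-{j}) g y) = 
      real (g j) * (real (g j) - 1) * psum N (g j) y * PP N (J-{j}) g y"
      unfolding psum_def by (simp add: sum_distrib_left sum_distrib_right)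
    show "(\<Sum>i<N. real (g j) * (real (g j) - 1) * y i ^ (g j) * PP N (J-{j}) g y
       + (\<Sum>l\<in>J-{j}. real (g j) * real (g l) * y i ^ (g j + g l) * PP N (J-{j}-{l}) g y)) =
      real (g j) * (real (g j) - 1) * psum N (g j) y * PP N (J-{j}) g y
       + (\<Sum>l\<in>J-{j}. real (g j) * real (g l) * psum N (g j + g l) y * PP N (J-{j}-{l}) g y)"
      by (simp only: sum.distrib 1 2)
  qed
  finally show ?thesis .
qed

lemma offdiag_sum:
  assumes "m \<le> r"
  shows "(\<Sum>i<N. \<Sum>k<N. if i \<noteq> k then y i ^ m * y k ^ (r - m) else 0)
     = psum N m y * psum N (r - m) y - psum N r y"
proof -
  have "(\<Sum>k<N. if i \<noteq> k then y i ^ m * y k ^ (r - m) else 0) = (\<Sum>k<N. y i ^ m * y k ^ (r - m)) - y i ^ r"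
    if "i < N" for i
  proof -
    have "(\<Sum>k<N. y i ^ m * y k ^ (r - m)) = y i ^ m * y i ^ (r - m) + (\<Sum>k\<in>{..<N}-{i}. y i ^ m * y k ^ (r - m))"
      using that by (subst sum.remove[of _ i]) auto
    moreover have "(\<Sum>k<N. if i \<noteq> k then y i ^ m * y k ^ (r - m) else 0) = (\<Sum>k\<in>{..<N}-{i}. y i ^ m * y k ^ (r - m))"
      using that by (subst sum.remove[of _ i]) (auto intro!: sum.cong)
    moreover have "y i ^ m * y i ^ (r - m) = y i ^ r" using assms by (simp add: power_add[symmetric])
    ultimately show ?thesis by simp
  qed
  then have "(\<Sum>i<N. \<Sum>k<N. if i \<noteq> k then y i ^ m * y k ^ (r - m) else 0)
     = (\<Sum>i<N. (\<Sum>k<N. y i ^ m * y k ^ (r - m)) - y i ^ r)" by (intro sum.cong) auto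
  also have "\<dots> = psum N m y * psum N (r - m) y - psum N r y"
    unfolding psum_def sum_subtractf sum_product by simp
  finally show ?thesis .
qed

lemma Dstar_part2:
  assumes "\<forall>j\<in>J. g j \<ge> 1" and dist: "\<forall>i<N. \<forall>j<N. i \<noteq> j \<longrightarrow> y i \<noteq> y j"
  shows "(\<Sum>i<N. \<Sum>k<N. if i \<noteq> k then (y i ^ 2 * partial i (PP N J g) y - y k ^ 2 * partial k (PP N J g) y) / (y i - y k) else 0)
    = (\<Sum>j\<in>J. real (g j) * PP N (J-{j}) g y * ((\<Sum>m<Suc (g j). psum N m y * psum N (g j - m) y) - real (g j + 1) * psum N (g j) y))"
proof -
  have a: "y i ^ 2 * partial i (PP N J g) y = (\<Sum>j\<in>J. real (g j) * PP N (J-{j}) g y * y i ^ Suc (g j))" if "i < N" for i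
    unfolding partial_PP[OF that] sum_distrib_left
  proof (rule sum.cong[OF refl])
    fix j assume "j \<in> J"
    then obtain a where "g j = Suc a" using assms by (metis Suc_pred' less_le_trans zero_less_one)
    then show "y i ^ 2 * (real (g j) * y i ^ (g j - 1) * (\<Prod>l\<in>J - {j}. psum N (g l) y)) =
         real (g j) * PP N (J - {j}) g y * y i ^ Suc (g j)"
      by (simp add: PP_def power2_eq_square)
  qed
  have b: "(if i \<noteq> k then (y i ^ 2 * partial i (PP N J g) y - y k ^ 2 * partial k (PP N J g) y) / (y i - y k) else 0)
     = (\<Sum>j\<in>J. real (g j) * PP N (J-{j}) g y * (\<Sum>m<Suc (g j). if i \<noteq> k then y i ^ m * y k ^ (g j - m) else 0))"
    if "i < N" "k < N" for i k
  proof (cases "i = k")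
    case False
    then have ne: "y i - y k \<noteq> 0" using dist that by auto
    have "y i ^ 2 * partial i (PP N J g) y - y k ^ 2 * partial k (PP N J g) y
       = (\<Sum>j\<in>J. real (g j) * PP N (J-{j}) g y * (y i ^ Suc (g j) - y k ^ Suc (g j)))"
      unfolding a[OF that(1)] a[OF that(2)] sum_subtractf[symmetric] by (simp add: algebra_simps)
    also have "\<dots> = (y i - y k) * (\<Sum>j\<in>J. real (g j) * PP N (J-{j}) g y * (\<Sum>m<Suc (g j). y i ^ m * y k ^ (g j - m)))"
      unfolding diff_power_eq_sum sum_distrib_left by (simp add: algebra_simps)
    finally show ?thesis using False ne by simp
  qed simp
  have "(\<Sum>i<N. \<Sum>k<N. if i \<noteq> k then (y i ^ 2 * partial i (PP N J g) y - y k ^ 2 * partial k (PP N J g) y) / (y i - y k) else 0)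
    = (\<Sum>i<N. \<Sum>k<N. \<Sum>j\<in>J. real (g j) * PP N (J-{j}) g y * (\<Sum>m<Suc (g j). if i \<noteq> k then y i ^ m * y k ^ (g j - m) else 0))"
    using b by (intro sum.cong refl) auto
  also have "\<dots> = (\<Sum>j\<in>J. real (g j) * PP N (J-{j}) g y * (\<Sum>m<Suc (g j). \<Sum>i<N. \<Sum>k<N. if i \<noteq> k then y i ^ m * y k ^ (g j - m) else 0))"
  proof -
    have "(\<Sum>i<N. \<Sum>k<N. \<Sum>j\<in>J. real (g j) * PP N (J-{j}) g y * (\<Sum>m<Suc (g j). if i \<noteq> k then y i ^ m * y k ^ (g j - m) else 0))
      = (\<Sum>i<N. \<Sum>j\<in>J. \<Sum>k<N. real (g j) * PP N (J-{j}) g y * (\<Sum>m<Suc (g j). if i \<noteq> k then y i ^ m * y k ^ (g j - m) else 0))"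
      by (intro sum.cong refl sum.swap)
    also have "\<dots> = (\<Sum>j\<in>J. \<Sum>i<N. \<Sum>k<N. real (g j) * PP N (J-{j}) g y * (\<Sum>m<Suc (g j). if i \<noteq> k then y i ^ m * y k ^ (g j - m) else 0))"
      by (rule sum.swap)
    also have "\<dots> = (\<Sum>j\<in>J. real (g j) * PP N (J-{j}) g y * (\<Sum>m<Suc (g j). \<Sum>i<N. \<Sum>k<N. if i \<noteq> k then y i ^ m * y k ^ (g j - m) else 0))"
    proof (rule sum.cong[OF refl])
      fix j
      have "(\<Sum>i<N. \<Sum>k<N. \<Sum>m<Suc (g j). if i \<noteq> k then y i ^ m * y k ^ (g j - m) else 0)
         = (\<Sum>i<N. \<Sum>m<Suc (g j). \<Sum>k<N. if i \<noteq> k then y i ^ m * y k ^ (g j - m) else 0)"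
        by (intro sum.cong refl sum.swap)
      also have "\<dots> = (\<Sum>m<Suc (g j). \<Sum>i<N. \<Sum>k<N. if i \<noteq> k then y i ^ m * y k ^ (g j - m) else 0)"
        by (rule sum.swap)
      finally have e: "(\<Sum>i<N. \<Sum>k<N. \<Sum>m<Suc (g j). if i \<noteq> k then y i ^ m * y k ^ (g j - m) else 0)
         = (\<Sum>m<Suc (g j). \<Sum>i<N. \<Sum>k<N. if i \<noteq> k then y i ^ m * y k ^ (g j - m) else 0)" .
      show "(\<Sum>i<N. \<Sum>k<N. real (g j) * PP N (J-{j}) g y * (\<Sum>m<Suc (g j). if i \<noteq> k then y i ^ m * y k ^ (g j - m) else 0))
        = real (g j) * PP N (J-{j}) g y * (\<Sum>m<Suc (g j). \<Sum>i<N. \<Sum>k<N. if i \<noteq> k then y i ^ m * y k ^ (g j - m) else 0)"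
        unfolding sum_distrib_left[symmetric] e ..
    qed
    finally show ?thesis .
  qed
  also have "\<dots> = (\<Sum>j\<in>J. real (g j) * PP N (J-{j}) g y * ((\<Sum>m<Suc (g j). psum N m y * psum N (g j - m) y) - real (g j + 1) * psum N (g j) y))"
    by (intro sum.cong refl arg_cong2[where f="(*)"]) (simp add: offdiag_sum sum_subtractf)
  finally show ?thesis .
qed



lemma orbit_of_perm:
  assumes "\<alpha> permutes {..<(n::nat)}"
  shows "orbit_of \<alpha> y = orbit \<alpha> y"
  unfolding orbit_of_def
  by (rule orbit_altdef_permutation[symmetric], rule permutes_imp_permutation[OF _ assms]) simp

lemma perm_of: "\<alpha> permutes {..<(n::nat)} \<Longrightarrow> permutation \<alpha>"
  by (rule permutes_imp_permutation[of "{..<n}"]) auto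

lemma orbit_of_self: "y \<in> orbit_of \<alpha> y"
  unfolding orbit_of_def by (auto intro: exI[of _ 0])

lemma funpow_in:
  assumes "\<alpha> permutes U" "y \<in> U"
  shows "(\<alpha> ^^ k) y \<in> U"
proof (induct k)
  case 0 then show ?case using assms(2) by simp
next
  case (Suc k) then show ?case using permutes_in_image[OF assms(1)] by simp
qed

lemma orbit_of_sub:
  assumes "\<alpha> permutes U" "y \<in> U"
  shows "orbit_of \<alpha> y \<subseteq> U"
  unfolding orbit_of_def using funpow_in[OF assms] by auto

lemma orbit_of_same:
  assumes "\<alpha> permutes {..<n}" "z \<in> orbit_of \<alpha> y"
  shows "orbit_of \<alpha> z = orbit_of \<alpha> y"
proof -
  have p: "permutation \<alpha>" using perm_of[OF assms(1)] .
  have z: "z \<in> orbit \<alpha> y" using assms(2) orbit_of_perm[OF assms(1)] by simp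
  have y: "y \<in> orbit \<alpha> y" by (rule permutation_self_in_orbit[OF p])
  have yz: "y \<in> orbit \<alpha> z" by (rule orbit_swap[OF y z])
  have "orbit \<alpha> z \<subseteq> orbit \<alpha> y"
  proof
    fix w assume "w \<in> orbit \<alpha> z" then show "w \<in> orbit \<alpha> y" using orbit_trans[OF _ z] by blast
  qed
  moreover have "orbit \<alpha> y \<subseteq> orbit \<alpha> z"
  proof
    fix w assume "w \<in> orbit \<alpha> y" then show "w \<in> orbit \<alpha> z" using orbit_trans[OF _ yz] by blast
  qed
  ultimately show ?thesis using orbit_of_perm[OF assms(1)] by simp
qed

lemma orbit_of_step:
  assumes "\<alpha> permutes {..<n}"
  shows "orbit_of \<alpha> (\<alpha> z) = orbit_of \<alpha> z"
  using orbit_of_perm[OF assms] permutation_orbit_step[OF perm_of[OF assms]] by simp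

lemma orbit_of_period:
  fixes a :: nat
  assumes "\<alpha> permutes {..<n}"
  defines "r \<equiv> funpow_dist1 \<alpha> a a"
  shows "0 < r" "(\<alpha> ^^ r) a = a" "orbit_of \<alpha> a = (\<lambda>i. (\<alpha> ^^ i) a) ` {..<r}"
    "inj_on (\<lambda>i. (\<alpha> ^^ i) a) {..<r}" "card (orbit_of \<alpha> a) = r"
proof -
  have y: "a \<in> orbit \<alpha> a" by (rule permutation_self_in_orbit[OF perm_of[OF assms(1)]])
  show "0 < r" unfolding r_def by simp
  show "(\<alpha> ^^ r) a = a" unfolding r_def by (rule funpow_dist1_prop[OF y])
  show o: "orbit_of \<alpha> a = (\<lambda>i. (\<alpha> ^^ i) a) ` {..<r}"
    unfolding orbit_of_perm[OF assms(1)] orbit_conv_funpow_dist1[OF y] r_def by (simp add: atLeast0LessThan)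
  show i: "inj_on (\<lambda>i. (\<alpha> ^^ i) a) {..<r}"
    using inj_on_funpow_dist1[OF y] unfolding r_def by (simp add: atLeast0LessThan)
  show "card (orbit_of \<alpha> a) = r" unfolding o card_image[OF i] by simp
qed

lemma orbit_of_agree:
  assumes "\<And>z. z \<in> S \<Longrightarrow> f z \<in> S" "\<And>z. z \<in> S \<Longrightarrow> f z = g z" "y \<in> S"
  shows "orbit_of f y = orbit_of g y"
proof -
  have "(f ^^ k) y = (g ^^ k) y \<and> (f ^^ k) y \<in> S" for k
    by (induct k) (use assms in auto)
  then show ?thesis unfolding orbit_of_def by auto
qed

lemma orbit_of_cycle:
  assumes "0 < m" "inj_on s {..<m}" "\<And>i. i < m \<Longrightarrow> f (s i) = s (Suc i mod m)" "i < m"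
  shows "orbit_of f (s i) = s ` {..<m}"
proof -
  have k: "(f ^^ k) (s i) = s ((i + k) mod m)" for k
  proof (induct k)
    case 0 then show ?case using assms(4) by simp
  next
    case (Suc k)
    have "(f ^^ Suc k) (s i) = f (s ((i + k) mod m))" using Suc by simp
    also have "\<dots> = s (Suc ((i + k) mod m) mod m)" by (rule assms(3)) (use assms(1) in simp)
    also have "Suc ((i + k) mod m) mod m = (i + Suc k) mod m" by (simp add: mod_Suc_eq)
    finally show ?case .
  qed
  show ?thesis
  proof
    show "orbit_of f (s i) \<subseteq> s ` {..<m}"
    proof
      fix z assume "z \<in> orbit_of f (s i)"
      then obtain k where "z = (f ^^ k) (s i)" unfolding orbit_of_def by blast
      then have "z = s ((i + k) mod m)" using k by simp
      moreover have "(i + k) mod m < m" using assms(1) by simp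
      ultimately show "z \<in> s ` {..<m}" by blast
    qed
    show "s ` {..<m} \<subseteq> orbit_of f (s i)"
    proof
      fix z assume "z \<in> s ` {..<m}"
      then obtain j where j: "j < m" "z = s j" by auto
      have "i + (j + m - i) = j + m" using j assms(4) by simp
      then have "(i + (j + m - i)) mod m = j" using j by simp
      then have "(f ^^ (j + m - i)) (s i) = z" using k j by simp
      then show "z \<in> orbit_of f (s i)" unfolding orbit_of_def by blast
    qed
  qed
qed

definition Orb :: "nat \<Rightarrow> (nat \<Rightarrow> nat) \<Rightarrow> nat set set" where
  "Orb n \<beta> = orbit_of \<beta> ` {..<n}"

lemma Orb_disj:
  assumes "\<alpha> permutes {..<n}" "A \<in> Orb n \<alpha>" "B \<in> Orb n \<alpha>" "z \<in> A" "z \<in> B"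
  shows "A = B"
proof -
  obtain u v where "A = orbit_of \<alpha> u" "B = orbit_of \<alpha> v" using assms(2,3) unfolding Orb_def by auto
  then show ?thesis using orbit_of_same[OF assms(1)] assms(4,5) by metis
qed

lemma Orb_sub:
  assumes "\<alpha> permutes {..<n}" "A \<in> Orb n \<alpha>"
  shows "A \<subseteq> {..<n}"
  using assms orbit_of_sub unfolding Orb_def by blast

lemma Orb_Union:
  assumes "\<alpha> permutes {..<n}"
  shows "\<Union>(Orb n \<alpha>) = {..<n}"
  using Orb_sub[OF assms] orbit_of_self unfolding Orb_def by blast

lemma Orb_finite: "finite (Orb n \<alpha>)"
  unfolding Orb_def by simp

lemma Orb_mem:
  assumes "\<alpha> permutes {..<n}" "A \<in> Orb n \<alpha>" "y \<in> A"
  shows "A = orbit_of \<alpha> y"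
proof -
  obtain u where "A = orbit_of \<alpha> u" using assms(2) unfolding Orb_def by auto
  then show ?thesis using orbit_of_same[OF assms(1)] assms(3) by metis
qed

lemma orbit_closed_out:
  assumes "\<alpha> permutes {..<n}" "z \<notin> orbit_of \<alpha> a"
  shows "\<alpha> z \<notin> orbit_of \<alpha> a"
proof
  assume "\<alpha> z \<in> orbit_of \<alpha> a"
  then have "orbit_of \<alpha> (\<alpha> z) = orbit_of \<alpha> a" by (rule orbit_of_same[OF assms(1)])
  then have "z \<in> orbit_of \<alpha> a" using orbit_of_step[OF assms(1)] orbit_of_self by metis
  then show False using assms(2) by simp
qed

lemma orbit_of_outside:
  assumes "\<alpha> permutes {..<n}" "\<And>z. z \<in> S \<Longrightarrow> \<beta> z = \<alpha> z"
    and "S = {..<n} - X" "\<And>z. z \<in> S \<Longrightarrow> \<alpha> z \<notin> X" "y \<in> S"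
  shows "orbit_of \<beta> y = orbit_of \<alpha> y"
proof (rule orbit_of_agree[symmetric, where S=S])
  fix z assume z: "z \<in> S"
  then have "\<alpha> z < n" using assms(1,3) permutes_in_image[OF assms(1)] by auto
  then show "\<alpha> z \<in> S" using assms(3,4) z by auto
  show "\<alpha> z = \<beta> z" using assms(2) z by simp
qed (rule assms(5))

lemma same_orbit:
  fixes a k :: nat and h :: "nat \<Rightarrow> real"
  assumes \<alpha>: "\<alpha> permutes {..<n}" and an: "a < n"
    and r: "r = funpow_dist1 \<alpha> a a" and k: "0 < k" "k < r"
  defines "b \<equiv> (\<alpha> ^^ k) a"
  defines "\<beta> \<equiv> Transposition.transpose a b \<circ> \<alpha>"
  shows "(\<Prod>A\<in>Orb n \<beta>. h (card A)) = h k * h (r - k) * (\<Prod>A\<in>Orb n \<alpha> - {orbit_of \<alpha> a}. h (card A))"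
proof -
  define s where "s i = (\<alpha> ^^ i) a" for i
  define Oa where "Oa = orbit_of \<alpha> a"
  have rp: "0 < r" "(\<alpha> ^^ r) a = a" "Oa = s ` {..<r}" "inj_on s {..<r}" "card Oa = r"
    using orbit_of_period[OF \<alpha>, of a] unfolding r[symmetric] s_def Oa_def by auto
  have sS: "\<alpha> (s i) = s (Suc i)" for i unfolding s_def by simp
  have s0: "s 0 = a" unfolding s_def by simp
  have sr: "s r = a" using rp unfolding s_def by simp
  have sk: "s k = b" unfolding s_def b_def by simp
  have sinj: "s i = s j \<longleftrightarrow> i = j" if "i < r" "j < r" for i j
    using rp(4) that by (auto dest: inj_onD)
  have ON: "Oa \<subseteq> {..<n}" unfolding Oa_def by (rule orbit_of_sub[OF \<alpha>]) (use an in simp)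
  have aO: "a \<in> Oa" unfolding Oa_def by (rule orbit_of_self)
  have bO: "b \<in> Oa" using sk rp(3) k by auto
  define s1 where "s1 = s"
  define s2 where "s2 i = s (k + i)" for i
  define P1 where "P1 = s1 ` {..<k}"
  define P2 where "P2 = s2 ` {..<r - k}"
  have inj1: "inj_on s1 {..<k}" using rp(4) k unfolding s1_def by (auto intro: inj_on_subset)
  have inj2: "inj_on s2 {..<r - k}"
    unfolding s2_def by (rule inj_onI) (use sinj in auto)
  have cyc1: "\<beta> (s1 i) = s1 (Suc i mod k)" if "i < k" for i
  proof (cases "Suc i = k")
    case True
    then show ?thesis unfolding \<beta>_def s1_def using sS sk s0 by simp
  next
    case False
    then have "Suc i < k" using that by simp
    then have "s (Suc i) \<noteq> a" "s (Suc i) \<noteq> b" using sinj[of "Suc i" 0] sinj[of "Suc i" k] s0 sk k by auto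
    then show ?thesis unfolding \<beta>_def s1_def using sS \<open>Suc i < k\<close> by simp
  qed
  have cyc2: "\<beta> (s2 i) = s2 (Suc i mod (r - k))" if "i < r - k" for i
  proof (cases "Suc i = r - k")
    case True
    then have "Suc (k + i) = r" using k by simp
    then show ?thesis unfolding \<beta>_def s2_def using sS sk sr True by simp
  next
    case False
    then have lt: "Suc (k + i) < r" using that by simp
    then have "s (Suc (k + i)) \<noteq> a" "s (Suc (k + i)) \<noteq> b"
      using sinj[of "Suc (k + i)" 0] sinj[of "Suc (k + i)" k] s0 sk k by auto
    then show ?thesis unfolding \<beta>_def s2_def using sS lt False that by simp
  qed
  have o1: "orbit_of \<beta> (s1 i) = P1" if "i < k" for i
    unfolding P1_def by (rule orbit_of_cycle[OF k(1) inj1 cyc1 that])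
  have o2: "orbit_of \<beta> (s2 i) = P2" if "i < r - k" for i
    unfolding P2_def by (rule orbit_of_cycle[OF _ inj2 cyc2 that]) (use k in simp)
  have c1: "card P1 = k" unfolding P1_def using card_image[OF inj1] by simp
  have c2: "card P2 = r - k" unfolding P2_def using card_image[OF inj2] by simp
  have P12: "Oa = P1 \<union> P2"
  proof
    show "Oa \<subseteq> P1 \<union> P2"
    proof
      fix y assume "y \<in> Oa"
      then obtain i where i: "i < r" "y = s i" using rp(3) by auto
      show "y \<in> P1 \<union> P2"
      proof (cases "i < k")
        case True then show ?thesis unfolding P1_def s1_def using i by auto
      next
        case False
        then have "y = s2 (i - k)" "i - k < r - k" unfolding s2_def using i by auto
        then show ?thesis unfolding P2_def by auto
      qed
    qed
    show "P1 \<union> P2 \<subseteq> Oa" unfolding P1_def P2_def s1_def s2_def rp(3) using k by auto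
  qed
  have a1: "a \<in> P1" unfolding P1_def s1_def using k s0 by force
  have a2: "a \<notin> P2"
  proof
    assume "a \<in> P2"
    then obtain i where "i < r - k" "s (k + i) = a" unfolding P2_def s2_def by auto
    moreover from this have "k + i < r" by simp
    ultimately show False using sinj[of "k + i" 0] s0 k by auto
  qed
  have b2: "b \<in> P2" unfolding P2_def s2_def using k sk by (intro image_eqI[of _ _ 0]) auto
  have outside: "orbit_of \<beta> y = orbit_of \<alpha> y" if "y \<in> {..<n} - Oa" for y
  proof (rule orbit_of_outside[OF \<alpha> _ refl _ that])
    fix z assume z: "z \<in> {..<n} - Oa"
    then have "\<alpha> z \<notin> Oa" unfolding Oa_def using orbit_closed_out[OF \<alpha>] by auto
    then show "\<alpha> z \<notin> Oa" .
    then show "\<beta> z = \<alpha> z" unfolding \<beta>_def using aO bO by (metis comp_apply transpose_apply_other)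
  qed
  have Oin: "Oa \<in> Orb n \<alpha>" unfolding Orb_def Oa_def using an by auto
  have OrbB: "Orb n \<beta> = insert P1 (insert P2 (Orb n \<alpha> - {Oa}))"
  proof
    show "Orb n \<beta> \<subseteq> insert P1 (insert P2 (Orb n \<alpha> - {Oa}))"
    proof
      fix A assume "A \<in> Orb n \<beta>"
      then obtain y where y: "y < n" "A = orbit_of \<beta> y" unfolding Orb_def by auto
      show "A \<in> insert P1 (insert P2 (Orb n \<alpha> - {Oa}))"
      proof (cases "y \<in> Oa")
        case True
        then consider "y \<in> P1" | "y \<in> P2" using P12 by auto
        then show ?thesis
        proof cases
          case 1 then show ?thesis using o1 y unfolding P1_def by auto
        next
          case 2 then show ?thesis using o2 y unfolding P2_def by auto
        qed
      next
        case False
        then have "A = orbit_of \<alpha> y" using outside y by auto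
        moreover have "orbit_of \<alpha> y \<noteq> Oa" using False orbit_of_self by metis
        ultimately show ?thesis using y unfolding Orb_def by auto
      qed
    qed
    show "insert P1 (insert P2 (Orb n \<alpha> - {Oa})) \<subseteq> Orb n \<beta>"
    proof (intro insert_subsetI subsetI)
      have "P1 = orbit_of \<beta> a" using o1[of 0] k s0 unfolding s1_def by simp
      then show "P1 \<in> Orb n \<beta>" using an unfolding Orb_def by auto
      have "P2 = orbit_of \<beta> b" using o2[of 0] k sk unfolding s2_def by simp
      moreover have "b < n" using bO ON by auto
      ultimately show "P2 \<in> Orb n \<beta>" unfolding Orb_def by auto
      fix A assume A: "A \<in> Orb n \<alpha> - {Oa}"
      then obtain y where y: "y < n" "A = orbit_of \<alpha> y" unfolding Orb_def by auto
      have "y \<notin> Oa"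
      proof
        assume "y \<in> Oa"
        then have "orbit_of \<alpha> y = Oa" unfolding Oa_def by (rule orbit_of_same[OF \<alpha>])
        then show False using A y by auto
      qed
      then have "A = orbit_of \<beta> y" using outside y by auto
      then show "A \<in> Orb n \<beta>" using y unfolding Orb_def by auto
    qed
  qed
  have n1: "P1 \<notin> insert P2 (Orb n \<alpha> - {Oa})"
  proof
    assume "P1 \<in> insert P2 (Orb n \<alpha> - {Oa})"
    moreover have "P1 \<noteq> P2" using a1 a2 by auto
    ultimately have "P1 \<in> Orb n \<alpha> - {Oa}" by auto
    then show False using Orb_disj[OF \<alpha> _ Oin, of P1 a] a1 aO by auto
  qed
  have n2: "P2 \<notin> Orb n \<alpha> - {Oa}"
  proof
    assume "P2 \<in> Orb n \<alpha> - {Oa}"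
    then show False using Orb_disj[OF \<alpha> _ Oin, of P2 b] b2 bO by auto
  qed
  show ?thesis
    unfolding OrbB using n1 n2 Orb_finite[of n \<alpha>] c1 c2 unfolding Oa_def[symmetric]
    by (simp add: mult.assoc)
qed

lemma diff_orbit:
  fixes a b :: nat and h :: "nat \<Rightarrow> real"
  assumes \<alpha>: "\<alpha> permutes {..<n}" and an: "a < n" and bn: "b < n" and bO: "b \<notin> orbit_of \<alpha> a"
  defines "r \<equiv> funpow_dist1 \<alpha> a a" and "r' \<equiv> funpow_dist1 \<alpha> b b"
  defines "\<beta> \<equiv> Transposition.transpose a b \<circ> \<alpha>"
  shows "(\<Prod>A\<in>Orb n \<beta>. h (card A)) = h (r + r') * (\<Prod>A\<in>Orb n \<alpha> - {orbit_of \<alpha> a, orbit_of \<alpha> b}. h (card A))"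
proof -
  define Oa where "Oa = orbit_of \<alpha> a"
  define Ob where "Ob = orbit_of \<alpha> b"
  define sa where "sa i = (\<alpha> ^^ i) a" for i
  define sb where "sb i = (\<alpha> ^^ i) b" for i
  have ra: "0 < r" "(\<alpha> ^^ r) a = a" "Oa = sa ` {..<r}" "inj_on sa {..<r}" "card Oa = r"
    using orbit_of_period[OF \<alpha>, of a] unfolding r_def sa_def Oa_def by auto
  have rb: "0 < r'" "(\<alpha> ^^ r') b = b" "Ob = sb ` {..<r'}" "inj_on sb {..<r'}" "card Ob = r'"
    using orbit_of_period[OF \<alpha>, of b] unfolding r'_def sb_def Ob_def by auto
  have aO: "a \<in> Oa" unfolding Oa_def by (rule orbit_of_self)
  have bOb: "b \<in> Ob" unfolding Ob_def by (rule orbit_of_self)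
  have OaIn: "Oa \<in> Orb n \<alpha>" unfolding Orb_def Oa_def using an by auto
  have ObIn: "Ob \<in> Orb n \<alpha>" unfolding Orb_def Ob_def using bn by auto
  have disj: "Oa \<inter> Ob = {}" using Orb_disj[OF \<alpha> OaIn ObIn] bO bOb unfolding Oa_def by blast
  have aOb: "a \<notin> Ob" using disj aO by auto
  have bOa: "b \<notin> Oa" using bO unfolding Oa_def .
  have saO: "sa i \<in> Oa" if "i < r" for i using ra that by auto
  have sbO: "sb i \<in> Ob" if "i < r'" for i using rb that by auto
  have sainj: "sa i = sa j \<longleftrightarrow> i = j" if "i < r" "j < r" for i j
    using ra(4) that by (auto dest: inj_onD)
  have sbinj: "sb i = sb j \<longleftrightarrow> i = j" if "i < r'" "j < r'" for i j
    using rb(4) that by (auto dest: inj_onD)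
  define m where "m = r + r'"
  define s where "s i = (if i < r then sa i else sb (i - r))" for i
  have m0: "0 < m" unfolding m_def using ra by simp
  have sin: "s i \<in> Oa \<union> Ob" if "i < m" for i using saO sbO that unfolding s_def m_def by auto
  have sinj: "inj_on s {..<m}"
  proof (rule inj_onI)
    fix i j assume i: "i \<in> {..<m}" and j: "j \<in> {..<m}" and e: "s i = s j"
    show "i = j"
    proof (cases "i < r"; cases "j < r")
      assume "i < r" "j < r" then show ?thesis using e sainj unfolding s_def by auto
    next
      assume "i < r" "\<not> j < r"
      then have "s i \<in> Oa" "s j \<in> Ob" using saO sbO j unfolding s_def m_def by auto
      then show ?thesis using e disj by auto
    next
      assume "\<not> i < r" "j < r"
      then have "s i \<in> Ob" "s j \<in> Oa" using saO sbO i unfolding s_def m_def by auto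
      then show ?thesis using e disj by auto
    next
      assume "\<not> i < r" "\<not> j < r"
      moreover have "i - r < r'" "j - r < r'" using i j rb(1) unfolding m_def by auto
      ultimately have "i - r = j - r" using e sbinj[of "i - r" "j - r"] unfolding s_def by auto
      then show ?thesis using \<open>\<not> i < r\<close> \<open>\<not> j < r\<close> by simp
    qed
  qed
  have simg: "s ` {..<m} = Oa \<union> Ob"
  proof
    show "s ` {..<m} \<subseteq> Oa \<union> Ob" using sin by auto
    show "Oa \<union> Ob \<subseteq> s ` {..<m}"
    proof
      fix y assume "y \<in> Oa \<union> Ob"
      then consider i where "i < r" "y = sa i" | i where "i < r'" "y = sb i" using ra rb by auto
      then show "y \<in> s ` {..<m}"
      proof cases
        case (1 i) then show ?thesis unfolding s_def m_def by (intro image_eqI[of _ _ i]) auto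
      next
        case (2 i) then show ?thesis unfolding s_def m_def by (intro image_eqI[of _ _ "r + i"]) auto
      qed
    qed
  qed
  have cyc: "\<beta> (s i) = s (Suc i mod m)" if "i < m" for i
  proof (cases "i < r")
    case True
    have e: "\<alpha> (s i) = sa (Suc i)" unfolding s_def sa_def using True by simp
    show ?thesis
    proof (cases "Suc i = r")
      case True
      then have "sa (Suc i) = a" using ra unfolding sa_def by simp
      moreover have "Suc i mod m = r" using True rb(1) unfolding m_def by simp
      moreover have "s r = b" unfolding s_def sb_def by simp
      ultimately show ?thesis unfolding \<beta>_def using e by simp
    next
      case False
      then have lt: "Suc i < r" using \<open>i < r\<close> by simp
      then have "sa (Suc i) \<noteq> a" using sainj[of "Suc i" 0] ra(1) unfolding sa_def by auto
      moreover have "sa (Suc i) \<noteq> b" using saO[OF lt] bOa by auto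
      moreover have "Suc i mod m = Suc i" using lt unfolding m_def by simp
      ultimately show ?thesis unfolding \<beta>_def using e lt unfolding s_def by simp
    qed
  next
    case False
    then have e: "\<alpha> (s i) = sb (Suc (i - r))" unfolding s_def sb_def by simp
    have ir: "i - r < r'" using that False unfolding m_def by simp
    show ?thesis
    proof (cases "Suc (i - r) = r'")
      case True
      then have "sb (Suc (i - r)) = b" using rb unfolding sb_def by simp
      moreover have "Suc i = m" using True False unfolding m_def by simp
      then have "Suc i mod m = 0" by simp
      moreover have "s 0 = a" unfolding s_def sa_def using ra by simp
      ultimately show ?thesis unfolding \<beta>_def using e by simp
    next
      case True2: False
      then have lt: "Suc (i - r) < r'" using ir by simp
      then have "sb (Suc (i - r)) \<noteq> b" using sbinj[of "Suc (i - r)" 0] rb(1) unfolding sb_def by auto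
      moreover have "sb (Suc (i - r)) \<noteq> a" using sbO[OF lt] aOb by auto
      moreover have "Suc i mod m = Suc i" using lt False unfolding m_def by simp
      moreover have "s (Suc i) = sb (Suc (i - r))" unfolding s_def using False by (simp add: Suc_diff_le)
      ultimately show ?thesis unfolding \<beta>_def using e by simp
    qed
  qed
  have ob: "orbit_of \<beta> y = Oa \<union> Ob" if yy: "y \<in> Oa \<union> Ob" for y
  proof -
    have "y \<in> s ` {..<m}" using yy simg by simp
    then obtain i where "i < m" "y = s i" by auto
    then show ?thesis using orbit_of_cycle[OF m0 sinj cyc] simg by simp
  qed
  have cU: "card (Oa \<union> Ob) = r + r'"
    using simg card_image[OF sinj] unfolding m_def by simp
  have outside: "orbit_of \<beta> y = orbit_of \<alpha> y" if "y \<in> {..<n} - (Oa \<union> Ob)" for y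
  proof (rule orbit_of_outside[OF \<alpha> _ refl _ that])
    fix z assume z: "z \<in> {..<n} - (Oa \<union> Ob)"
    then have "\<alpha> z \<notin> Oa" "\<alpha> z \<notin> Ob" unfolding Oa_def Ob_def using orbit_closed_out[OF \<alpha>] by auto
    then show "\<alpha> z \<notin> Oa \<union> Ob" by simp
    then show "\<beta> z = \<alpha> z" unfolding \<beta>_def using aO bOb by (metis UnI1 UnI2 comp_apply transpose_apply_other)
  qed
  have OrbB: "Orb n \<beta> = insert (Oa \<union> Ob) (Orb n \<alpha> - {Oa, Ob})"
  proof
    show "Orb n \<beta> \<subseteq> insert (Oa \<union> Ob) (Orb n \<alpha> - {Oa, Ob})"
    proof
      fix A assume "A \<in> Orb n \<beta>"
      then obtain y where y: "y < n" "A = orbit_of \<beta> y" unfolding Orb_def by auto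
      show "A \<in> insert (Oa \<union> Ob) (Orb n \<alpha> - {Oa, Ob})"
      proof (cases "y \<in> Oa \<union> Ob")
        case True then show ?thesis using ob y by auto
      next
        case False
        then have "A = orbit_of \<alpha> y" using outside y by auto
        moreover have "orbit_of \<alpha> y \<noteq> Oa" "orbit_of \<alpha> y \<noteq> Ob" using False orbit_of_self[of y \<alpha>] by auto
        ultimately show ?thesis using y unfolding Orb_def by auto
      qed
    qed
    show "insert (Oa \<union> Ob) (Orb n \<alpha> - {Oa, Ob}) \<subseteq> Orb n \<beta>"
    proof (intro insert_subsetI subsetI)
      show "Oa \<union> Ob \<in> Orb n \<beta>" using ob[of a] aO an unfolding Orb_def by auto
      fix A assume A: "A \<in> Orb n \<alpha> - {Oa, Ob}"
      then obtain y where y: "y < n" "A = orbit_of \<alpha> y" unfolding Orb_def by auto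
      have "y \<notin> Oa \<union> Ob"
      proof
        assume "y \<in> Oa \<union> Ob"
        then have "orbit_of \<alpha> y = Oa \<or> orbit_of \<alpha> y = Ob" unfolding Oa_def Ob_def
          using orbit_of_same[OF \<alpha>] by blast
        then show False using A y by auto
      qed
      then have "A = orbit_of \<beta> y" using outside y by auto
      then show "A \<in> Orb n \<beta>" using y unfolding Orb_def by auto
    qed
  qed
  have nU: "Oa \<union> Ob \<notin> Orb n \<alpha> - {Oa, Ob}"
  proof
    assume "Oa \<union> Ob \<in> Orb n \<alpha> - {Oa, Ob}"
    then have "Oa \<union> Ob = Oa" using Orb_disj[OF \<alpha> _ OaIn, of "Oa \<union> Ob" a] aO by auto
    then show False using bOb bOa by auto
  qed
  show ?thesis
    unfolding OrbB using nU Orb_finite[of n \<alpha>] cU unfolding Oa_def Ob_def by simp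
qed

lemma pair_half:
  fixes f :: "nat \<Rightarrow> nat \<Rightarrow> real"
  assumes sym: "\<And>a b. f a b = f b a"
  shows "(\<Sum>p\<in>{(a, b). a < b \<and> b < n}. f (fst p) (snd p)) = (1/2) * (\<Sum>a<n. \<Sum>b\<in>{..<n}-{a}. f a b)"
proof -
  define S1 where "S1 = {(a, b). a < b \<and> b < (n::nat)}"
  define S2 where "S2 = {(a, b). b < a \<and> a < (n::nat)}"
  have fin1: "finite S1" unfolding S1_def by (rule finite_subset[of _ "{..<n} \<times> {..<n}"]) auto
  have fin2: "finite S2" unfolding S2_def by (rule finite_subset[of _ "{..<n} \<times> {..<n}"]) auto
  have "(\<Sum>a<n. \<Sum>b\<in>{..<n}-{a}. f a b) = (\<Sum>p\<in>(SIGMA a:{..<n}. {..<n}-{a}). f (fst p) (snd p))"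
    by (subst sum.Sigma) (auto simp: case_prod_beta)
  also have "(SIGMA a:{..<n}. {..<n}-{a}) = S1 \<union> S2" unfolding S1_def S2_def by auto
  also have "(\<Sum>p\<in>S1 \<union> S2. f (fst p) (snd p)) = (\<Sum>p\<in>S1. f (fst p) (snd p)) + (\<Sum>p\<in>S2. f (fst p) (snd p))"
    by (rule sum.union_disjoint[OF fin1 fin2]) (auto simp: S1_def S2_def)
  also have "(\<Sum>p\<in>S2. f (fst p) (snd p)) = (\<Sum>p\<in>S1. f (fst p) (snd p))"
  proof -
    have "S2 = prod.swap ` S1" unfolding S1_def S2_def by auto
    then have "(\<Sum>p\<in>S2. f (fst p) (snd p)) = (\<Sum>p\<in>S1. f (fst (prod.swap p)) (snd (prod.swap p)))"
      by (simp add: sum.reindex)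
    also have "\<dots> = (\<Sum>p\<in>S1. f (fst p) (snd p))" using sym by (simp add: case_prod_beta)
    finally show ?thesis .
  qed
  finally show ?thesis unfolding S1_def by simp
qed

lemma sum_same_orbit:
  fixes h :: "nat \<Rightarrow> real" and a :: nat
  assumes \<alpha>: "\<alpha> permutes {..<n}" and an: "a < n"
  shows "(\<Sum>b\<in>orbit_of \<alpha> a - {a}. \<Prod>A\<in>Orb n (Transposition.transpose a b \<circ> \<alpha>). h (card A))
    = (\<Sum>k\<in>{1..<card (orbit_of \<alpha> a)}. h k * h (card (orbit_of \<alpha> a) - k)) * (\<Prod>A\<in>Orb n \<alpha> - {orbit_of \<alpha> a}. h (card A))"
proof -
  define r where "r = funpow_dist1 \<alpha> a a"
  have rp: "0 < r" "(\<alpha> ^^ r) a = a" "orbit_of \<alpha> a = (\<lambda>i. (\<alpha> ^^ i) a) ` {..<r}"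
    "inj_on (\<lambda>i. (\<alpha> ^^ i) a) {..<r}" "card (orbit_of \<alpha> a) = r"
    using orbit_of_period[OF \<alpha>, of a] unfolding r_def by auto
  have inj: "inj_on (\<lambda>i. (\<alpha> ^^ i) a) {1..<r}" by (rule inj_on_subset[OF rp(4)]) auto
  have img: "(\<lambda>i. (\<alpha> ^^ i) a) ` {1..<r} = orbit_of \<alpha> a - {a}"
  proof
    show "(\<lambda>i. (\<alpha> ^^ i) a) ` {1..<r} \<subseteq> orbit_of \<alpha> a - {a}"
    proof
      fix z assume "z \<in> (\<lambda>i. (\<alpha> ^^ i) a) ` {1..<r}"
      then obtain i where i: "1 \<le> i" "i < r" "z = (\<alpha> ^^ i) a" by auto
      have "(\<alpha> ^^ i) a \<noteq> (\<alpha> ^^ 0) a" using inj_onD[OF rp(4), of i 0] i rp(1) by auto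
      then show "z \<in> orbit_of \<alpha> a - {a}" using i rp(3) by auto
    qed
    show "orbit_of \<alpha> a - {a} \<subseteq> (\<lambda>i. (\<alpha> ^^ i) a) ` {1..<r}"
    proof
      fix z assume z: "z \<in> orbit_of \<alpha> a - {a}"
      then obtain i where i: "i < r" "z = (\<alpha> ^^ i) a" using rp(3) by auto
      have "i \<noteq> 0" using z i by (cases i) auto
      then show "z \<in> (\<lambda>i. (\<alpha> ^^ i) a) ` {1..<r}" using i by auto
    qed
  qed
  have "(\<Sum>b\<in>orbit_of \<alpha> a - {a}. \<Prod>A\<in>Orb n (Transposition.transpose a b \<circ> \<alpha>). h (card A))
     = (\<Sum>k\<in>{1..<r}. \<Prod>A\<in>Orb n (Transposition.transpose a ((\<alpha> ^^ k) a) \<circ> \<alpha>). h (card A))"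
    unfolding img[symmetric] by (rule sum.reindex[OF inj, unfolded comp_def])
  also have "\<dots> = (\<Sum>k\<in>{1..<r}. h k * h (r - k) * (\<Prod>A\<in>Orb n \<alpha> - {orbit_of \<alpha> a}. h (card A)))"
    by (rule sum.cong[OF refl], rule same_orbit[OF \<alpha> an r_def]) auto
  finally show ?thesis unfolding rp(5) by (simp add: sum_distrib_right)
qed

lemma Orb_fin_disj:
  assumes \<alpha>: "\<alpha> permutes {..<n}" and "C \<subseteq> Orb n \<alpha>"
  shows "\<forall>A\<in>C. finite A" "\<forall>A\<in>C. \<forall>B\<in>C. A \<noteq> B \<longrightarrow> A \<inter> B = {}"
proof -
  show "\<forall>A\<in>C. finite A" using Orb_sub[OF \<alpha>] assms(2) finite_subset by blast
  show "\<forall>A\<in>C. \<forall>B\<in>C. A \<noteq> B \<longrightarrow> A \<inter> B = {}" using Orb_disj[OF \<alpha>] assms(2) by blast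
qed

lemma sum_diff_orbit:
  fixes h :: "nat \<Rightarrow> real" and a :: nat
  assumes \<alpha>: "\<alpha> permutes {..<n}" and an: "a < n"
  shows "(\<Sum>b\<in>{..<n} - orbit_of \<alpha> a. \<Prod>A\<in>Orb n (Transposition.transpose a b \<circ> \<alpha>). h (card A))
    = (\<Sum>B\<in>Orb n \<alpha> - {orbit_of \<alpha> a}. real (card B) * h (card (orbit_of \<alpha> a) + card B) * (\<Prod>A\<in>Orb n \<alpha> - {orbit_of \<alpha> a} - {B}. h (card A)))"
proof -
  define Oa where "Oa = orbit_of \<alpha> a"
  have OaIn: "Oa \<in> Orb n \<alpha>" unfolding Orb_def Oa_def using an by auto
  have U: "{..<n} - Oa = \<Union>(Orb n \<alpha> - {Oa})"
  proof
    show "{..<n} - Oa \<subseteq> \<Union>(Orb n \<alpha> - {Oa})" using Orb_Union[OF \<alpha>] by auto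
    show "\<Union>(Orb n \<alpha> - {Oa}) \<subseteq> {..<n} - Oa"
      using Orb_Union[OF \<alpha>] Orb_disj[OF \<alpha> _ OaIn] by blast
  qed
  have fd: "\<forall>A\<in>Orb n \<alpha> - {Oa}. finite A" "\<forall>A\<in>Orb n \<alpha> - {Oa}. \<forall>B\<in>Orb n \<alpha> - {Oa}. A \<noteq> B \<longrightarrow> A \<inter> B = {}"
    using Orb_fin_disj[OF \<alpha>, of "Orb n \<alpha> - {Oa}"] by auto
  have "(\<Sum>b\<in>{..<n} - Oa. \<Prod>A\<in>Orb n (Transposition.transpose a b \<circ> \<alpha>). h (card A))
     = (\<Sum>B\<in>Orb n \<alpha> - {Oa}. \<Sum>b\<in>B. \<Prod>A\<in>Orb n (Transposition.transpose a b \<circ> \<alpha>). h (card A))"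
    unfolding U by (subst sum.Union_disjoint[OF fd]) simp
  also have "\<dots> = (\<Sum>B\<in>Orb n \<alpha> - {Oa}. \<Sum>b\<in>B. h (card Oa + card B) * (\<Prod>A\<in>Orb n \<alpha> - {Oa} - {B}. h (card A)))"
  proof (intro sum.cong refl)
    fix B b assume B: "B \<in> Orb n \<alpha> - {Oa}" and b: "b \<in> B"
    have Bo: "B = orbit_of \<alpha> b" using Orb_mem[OF \<alpha> _ b] B by auto
    have bn: "b < n" using Orb_sub[OF \<alpha>] B b by auto
    have bO: "b \<notin> Oa" using Orb_disj[OF \<alpha> _ OaIn, of B b] B b by auto
    have ca: "card Oa = funpow_dist1 \<alpha> a a" unfolding Oa_def using orbit_of_period(5)[OF \<alpha>] by simp
    have cb: "card B = funpow_dist1 \<alpha> b b" unfolding Bo using orbit_of_period(5)[OF \<alpha>] by simp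
    have e: "Orb n \<alpha> - {orbit_of \<alpha> a, orbit_of \<alpha> b} = Orb n \<alpha> - {Oa} - {B}" unfolding Oa_def Bo by auto
    show "(\<Prod>A\<in>Orb n (Transposition.transpose a b \<circ> \<alpha>). h (card A)) = h (card Oa + card B) * (\<Prod>A\<in>Orb n \<alpha> - {Oa} - {B}. h (card A))"
      using diff_orbit[OF \<alpha> an bn bO[unfolded Oa_def], of h] unfolding e ca cb .
  qed
  also have "\<dots> = (\<Sum>B\<in>Orb n \<alpha> - {Oa}. real (card B) * h (card Oa + card B) * (\<Prod>A\<in>Orb n \<alpha> - {Oa} - {B}. h (card A)))"
    by (simp add: mult.assoc)
  finally show ?thesis unfolding Oa_def .
qed

definition Gf :: "nat \<Rightarrow> (nat \<Rightarrow> nat) \<Rightarrow> (nat \<Rightarrow> real) \<Rightarrow> nat set \<Rightarrow> real" where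
  "Gf n \<alpha> h Oa = (\<Sum>k\<in>{1..<card Oa}. h k * h (card Oa - k)) * (\<Prod>A\<in>Orb n \<alpha> - {Oa}. h (card A))
     + (\<Sum>B\<in>Orb n \<alpha> - {Oa}. real (card B) * h (card Oa + card B) * (\<Prod>A\<in>Orb n \<alpha> - {Oa} - {B}. h (card A)))"

lemma pair_sum:
  fixes h :: "nat \<Rightarrow> real"
  assumes \<alpha>: "\<alpha> permutes {..<n}"
  shows "(\<Sum>p\<in>{(a, b). a < b \<and> b < n}. \<Prod>A\<in>Orb n (Transposition.transpose (fst p) (snd p) \<circ> \<alpha>). h (card A))
    = (1/2) * (\<Sum>Oa\<in>Orb n \<alpha>. real (card Oa) * Gf n \<alpha> h Oa)"
proof -
  have "(\<Sum>p\<in>{(a, b). a < b \<and> b < n}. \<Prod>A\<in>Orb n (Transposition.transpose (fst p) (snd p) \<circ> \<alpha>). h (card A))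
    = (1/2) * (\<Sum>a<n. \<Sum>b\<in>{..<n}-{a}. \<Prod>A\<in>Orb n (Transposition.transpose a b \<circ> \<alpha>). h (card A))"
    by (rule pair_half) (simp add: transpose_commute)
  also have "(\<Sum>a<n. \<Sum>b\<in>{..<n}-{a}. \<Prod>A\<in>Orb n (Transposition.transpose a b \<circ> \<alpha>). h (card A))
     = (\<Sum>a<n. Gf n \<alpha> h (orbit_of \<alpha> a))"
  proof (rule sum.cong[OF refl])
    fix a assume a: "a \<in> {..<n}"
    have sub: "orbit_of \<alpha> a \<subseteq> {..<n}" using orbit_of_sub[OF \<alpha>] a by auto
    have "{..<n}-{a} = (orbit_of \<alpha> a - {a}) \<union> ({..<n} - orbit_of \<alpha> a)" using sub orbit_of_self[of a \<alpha>] by auto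
    then have "(\<Sum>b\<in>{..<n}-{a}. \<Prod>A\<in>Orb n (Transposition.transpose a b \<circ> \<alpha>). h (card A))
      = (\<Sum>b\<in>orbit_of \<alpha> a - {a}. \<Prod>A\<in>Orb n (Transposition.transpose a b \<circ> \<alpha>). h (card A))
       + (\<Sum>b\<in>{..<n} - orbit_of \<alpha> a. \<Prod>A\<in>Orb n (Transposition.transpose a b \<circ> \<alpha>). h (card A))"
      using sub by (simp only:) (rule sum.union_disjoint, auto intro: finite_subset)
    then show "(\<Sum>b\<in>{..<n}-{a}. \<Prod>A\<in>Orb n (Transposition.transpose a b \<circ> \<alpha>). h (card A)) = Gf n \<alpha> h (orbit_of \<alpha> a)"
      using sum_same_orbit[OF \<alpha>, of a h] sum_diff_orbit[OF \<alpha>, of a h] a unfolding Gf_def by simp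
  qed
  also have "(\<Sum>a<n. Gf n \<alpha> h (orbit_of \<alpha> a)) = (\<Sum>Oa\<in>Orb n \<alpha>. real (card Oa) * Gf n \<alpha> h Oa)"
  proof -
    have "(\<Sum>a<n. Gf n \<alpha> h (orbit_of \<alpha> a)) = (\<Sum>Oa\<in>Orb n \<alpha>. \<Sum>a\<in>Oa. Gf n \<alpha> h (orbit_of \<alpha> a))"
      using sum.Union_disjoint[OF Orb_fin_disj[OF \<alpha> subset_refl], of "\<lambda>a. Gf n \<alpha> h (orbit_of \<alpha> a)"]
      unfolding Orb_Union[OF \<alpha>] by simp
    also have "\<dots> = (\<Sum>Oa\<in>Orb n \<alpha>. \<Sum>a\<in>Oa. Gf n \<alpha> h Oa)"
      by (intro sum.cong refl) (metis Orb_mem[OF \<alpha>])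
    finally show ?thesis by simp
  qed
  finally show ?thesis .
qed

lemma ct_Orb: "cycle_type n \<beta> = image_mset card (mset_set (Orb n \<beta>))"
  unfolding cycle_type_def Orb_def ..

lemma ppart_ct: "ppart N (cycle_type n \<beta>) y = (\<Prod>A\<in>Orb n \<beta>. psum N (card A) y)"
  unfolding ppart_def ct_Orb image_mset.compositionality prod_unfold_prod_mset by (simp add: comp_def)

lemma ct_part:
  assumes \<beta>: "\<beta> permutes {..<n}"
  shows "cycle_type n \<beta> \<in> partitions n"
proof -
  have fd: "\<forall>A\<in>Orb n \<beta>. finite A" "\<forall>A\<in>Orb n \<beta>. \<forall>B\<in>Orb n \<beta>. A \<noteq> B \<longrightarrow> A \<inter> B = {}"
    using Orb_fin_disj[OF \<beta> subset_refl] by auto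
  have pos: "0 < k" if kk: "k \<in># cycle_type n \<beta>" for k
  proof -
    have "k \<in> card ` Orb n \<beta>" using kk Orb_finite[of n \<beta>] unfolding ct_Orb by simp
    then obtain A where A: "A \<in> Orb n \<beta>" "k = card A" by auto
    then obtain y where "A = orbit_of \<beta> y" unfolding Orb_def by auto
    then have "A \<noteq> {}" using orbit_of_self by auto
    then show ?thesis using A fd by auto
  qed
  have "sum_mset (cycle_type n \<beta>) = sum card (Orb n \<beta>)"
    unfolding ct_Orb sum_unfold_sum_mset ..
  also have "\<dots> = card (\<Union>(Orb n \<beta>))"
    by (rule card_Union_disjoint[symmetric]) (use fd in \<open>auto simp: pairwise_def disjnt_def\<close>)
  also have "\<dots> = n" unfolding Orb_Union[OF \<beta>] by simp
  finally show ?thesis unfolding partitions_def using pos by auto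
qed

lemma part_bounds:
  assumes "\<forall>k\<in>#M. 0 < (k::nat)"
  shows "size M \<le> sum_mset M \<and> (\<forall>k\<in>#M. k \<le> sum_mset M)"
  using assms by (induct M) auto

lemma finite_partitions: "finite (partitions n)"
proof -
  have "partitions n \<subseteq> mset ` {xs. set xs \<subseteq> {..n} \<and> length xs \<le> n}"
  proof
    fix M assume "M \<in> partitions n"
    then have M: "\<forall>k\<in>#M. 0 < k" "sum_mset M = n" unfolding partitions_def by auto
    obtain xs where xs: "mset xs = M" using ex_mset by blast
    have "set xs \<subseteq> {..n}" "length xs \<le> n"
      using part_bounds[OF M(1)] M(2) xs by (auto simp flip: set_mset_mset)
    then show "M \<in> mset ` {xs. set xs \<subseteq> {..n} \<and> length xs \<le> n}" using xs by auto
  qed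
  moreover have "finite (mset ` {xs. set xs \<subseteq> {..n} \<and> length xs \<le> n})"
    by (intro finite_imageI finite_lists_length_le) simp
  ultimately show ?thesis by (rule finite_subset)
qed

lemma exists_perm_aux:
  "\<forall>n. sig \<in> partitions n \<longrightarrow> (\<exists>\<alpha>. \<alpha> permutes {..<n} \<and> cycle_type n \<alpha> = sig)"
proof (induct sig)
  case empty
  show ?case
  proof (intro allI impI)
    fix n assume "{#} \<in> partitions n"
    then have n: "n = 0" unfolding partitions_def by auto
    have "Orb n id = {}" unfolding Orb_def n by simp
    then show "\<exists>\<alpha>. \<alpha> permutes {..<n} \<and> cycle_type n \<alpha> = {#}"
      using permutes_id[of "{..<n}"] unfolding ct_Orb by (intro exI[of _ id]) auto
  qed
next
  case (add r sig)
  show ?case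
  proof (intro allI impI)
    fix n assume "add_mset r sig \<in> partitions n"
    then have r: "0 < r" and sp: "sig \<in> partitions (n - r)" and nr: "r \<le> n"
      unfolding partitions_def by auto
    define m where "m = n - r"
    obtain \<alpha>' where \<alpha>': "\<alpha>' permutes {..<m}" "cycle_type m \<alpha>' = sig" using add sp unfolding m_def by blast
    define \<alpha> where "\<alpha> y = (if y < m then \<alpha>' y else if y < n then (if Suc y < n then Suc y else m) else y)" for y
    have a'm: "\<alpha>' y < m" if "y < m" for y using permutes_in_image[OF \<alpha>'(1)] that by simp
    have injA: "inj_on \<alpha> {..<n}"
    proof (rule inj_onI)
      fix u v assume u: "u \<in> {..<n}" and v: "v \<in> {..<n}" and e: "\<alpha> u = \<alpha> v"
      show "u = v"
      proof (cases "u < m"; cases "v < m")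
        assume "u < m" "v < m"
        then show ?thesis using e permutes_inj[OF \<alpha>'(1)] unfolding \<alpha>_def by (auto dest: injD)
      next
        assume "u < m" "\<not> v < m"
        then show ?thesis using e a'm[of u] u v unfolding \<alpha>_def by (auto split: if_splits)
      next
        assume "\<not> u < m" "v < m"
        then show ?thesis using e a'm[of v] u v unfolding \<alpha>_def by (auto split: if_splits)
      next
        assume "\<not> u < m" "\<not> v < m"
        then show ?thesis using e u v unfolding \<alpha>_def m_def by (auto split: if_splits)
      qed
    qed
    have imgA: "\<alpha> ` {..<n} \<subseteq> {..<n}"
    proof
      fix z assume "z \<in> \<alpha> ` {..<n}"
      then obtain y where y: "y < n" "z = \<alpha> y" by auto
      show "z \<in> {..<n}"
      proof (cases "y < m")
        case True then show ?thesis using a'm[of y] y nr unfolding \<alpha>_def m_def by auto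
      qed (use y in \<open>auto simp: \<alpha>_def m_def\<close>)
    qed
    have perm: "\<alpha> permutes {..<n}"
    proof (rule bij_imp_permutes)
      show "bij_betw \<alpha> {..<n} {..<n}" unfolding bij_betw_def
        using injA endo_inj_surj[OF _ imgA injA] by simp
      show "\<alpha> x = x" if "x \<notin> {..<n}" for x using that nr unfolding \<alpha>_def m_def by auto
    qed
    define C where "C = {m..<n}"
    define s where "s i = m + i" for i
    have Cs: "C = s ` {..<r}"
    proof
      show "s ` {..<r} \<subseteq> C" unfolding C_def s_def m_def using nr by auto
      show "C \<subseteq> s ` {..<r}"
      proof
        fix x assume "x \<in> C"
        then have "x - m < r" "x = s (x - m)" unfolding C_def s_def m_def using nr by auto
        then show "x \<in> s ` {..<r}" by blast
      qed
    qed
    have sinj: "inj_on s {..<r}" unfolding s_def by (auto intro: inj_onI)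
    have cyc: "\<alpha> (s i) = s (Suc i mod r)" if ir: "i < r" for i
    proof (cases "Suc i = r")
      case True
      then show ?thesis using nr unfolding \<alpha>_def s_def m_def by auto
    next
      case False
      then have "Suc i < r" using ir by simp
      then show ?thesis using nr unfolding \<alpha>_def s_def m_def by auto
    qed
    have oC: "orbit_of \<alpha> y = C" if yC: "y \<in> C" for y
    proof -
      have "y \<in> s ` {..<r}" using yC Cs by simp
      then obtain i where "i < r" "y = s i" by auto
      then show ?thesis using orbit_of_cycle[OF r sinj cyc] Cs by simp
    qed
    have oL: "orbit_of \<alpha> y = orbit_of \<alpha>' y" if "y < m" for y
      by (rule orbit_of_agree[where S="{..<m}"]) (use that a'm in \<open>auto simp: \<alpha>_def\<close>)
    have OrbA: "Orb n \<alpha> = insert C (Orb m \<alpha>')"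
    proof -
      have "{..<n} = {..<m} \<union> C" unfolding C_def m_def using nr by auto
      then have "Orb n \<alpha> = orbit_of \<alpha> ` {..<m} \<union> orbit_of \<alpha> ` C" unfolding Orb_def by auto
      also have "orbit_of \<alpha> ` {..<m} = Orb m \<alpha>'" unfolding Orb_def using oL by auto
      also have "orbit_of \<alpha> ` C = {C}" using oC Cs r by auto
      finally show ?thesis by auto
    qed
    have Cn: "C \<notin> Orb m \<alpha>'"
    proof
      assume "C \<in> Orb m \<alpha>'"
      then have "C \<subseteq> {..<m}" by (rule Orb_sub[OF \<alpha>'(1)])
      moreover have "m \<in> C" unfolding C_def m_def using r nr by auto
      ultimately show False by auto
    qed
    have cC: "card C = r" unfolding C_def m_def using nr by simp
    have "cycle_type n \<alpha> = add_mset r sig"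
      unfolding ct_Orb OrbA using Cn Orb_finite[of m \<alpha>'] cC \<alpha>'(2) unfolding ct_Orb by simp
    then show "\<exists>\<alpha>. \<alpha> permutes {..<n} \<and> cycle_type n \<alpha> = add_mset r sig" using perm by blast
  qed
qed

lemma A_sum:
  assumes \<alpha>: "\<alpha> permutes {..<n}"
  shows "(\<Sum>lam\<in>partitions n. real (card {(a, b). a < b \<and> b < n \<and> cycle_type n (Transposition.transpose a b \<circ> \<alpha>) = lam}) * ppart N lam y)
    = (\<Sum>p\<in>{(a, b). a < b \<and> b < n}. ppart N (cycle_type n (Transposition.transpose (fst p) (snd p) \<circ> \<alpha>)) y)"
proof -
  define S where "S = {(a, b). a < b \<and> b < (n::nat)}"
  define g where "g p = cycle_type n (Transposition.transpose (fst p) (snd p) \<circ> \<alpha>)" for p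
  have finS: "finite S" unfolding S_def by (rule finite_subset[of _ "{..<n} \<times> {..<n}"]) auto
  have gS: "g ` S \<subseteq> partitions n"
  proof
    fix l assume "l \<in> g ` S"
    then obtain a b where ab: "a < b" "b < n" "l = g (a, b)" unfolding S_def by auto
    have "Transposition.transpose a b \<circ> \<alpha> permutes {..<n}"
      by (rule permutes_compose[OF \<alpha> permutes_swap_id]) (use ab in auto)
    then show "l \<in> partitions n" unfolding ab g_def by (simp add: ct_part)
  qed
  have eqset: "{(a, b). a < b \<and> b < n \<and> cycle_type n (Transposition.transpose a b \<circ> \<alpha>) = lam} = {p \<in> S. g p = lam}" for lam
    unfolding S_def g_def by auto
  have "(\<Sum>p\<in>S. ppart N (g p) y) = (\<Sum>l\<in>g ` S. \<Sum>p\<in>{p \<in> S. g p = l}. ppart N (g p) y)"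
    by (rule sum.image_gen[OF finS])
  also have "\<dots> = (\<Sum>l\<in>g ` S. real (card {p \<in> S. g p = l}) * ppart N l y)"
    by (intro sum.cong refl) simp
  also have "\<dots> = (\<Sum>l\<in>partitions n. real (card {p \<in> S. g p = l}) * ppart N l y)"
  proof (rule sum.mono_neutral_left[OF finite_partitions gS])
    show "\<forall>i\<in>partitions n - g ` S. real (card {p \<in> S. g p = i}) * ppart N i y = 0"
    proof
      fix i assume "i \<in> partitions n - g ` S"
      then have "{p \<in> S. g p = i} = {}" by blast
      then show "real (card {p \<in> S. g p = i}) * ppart N i y = 0" by (metis card.empty mult_zero_left of_nat_0)
    qed
  qed
  finally show ?thesis unfolding eqset S_def g_def by simp
qed

lemma Dstar_PP:
  assumes "\<forall>j\<in>J. g j \<ge> 1" and dist: "\<forall>i<N. \<forall>j<N. i \<noteq> j \<longrightarrow> y i \<noteq> y j"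
  shows "(1/2) * Dstar N (PP N J g) y =
    (\<Sum>j\<in>J. real (g j) * (real N - 1) * psum N (g j) y * PP N (J-{j}) g y
       + real (g j) / 2 * (\<Sum>k\<in>{1..<g j}. psum N k y * psum N (g j - k) y) * PP N (J-{j}) g y)
    + (1/2) * (\<Sum>j\<in>J. \<Sum>l\<in>J-{j}. real (g j) * real (g l) * psum N (g j + g l) y * PP N (J-{j}-{l}) g y)"
proof -
  have p0: "psum N 0 y = real N" unfolding psum_def by simp
  have split: "(\<Sum>m<Suc r. psum N m y * psum N (r - m) y) = 2 * real N * psum N r y + (\<Sum>k\<in>{1..<r}. psum N k y * psum N (r - k) y)"
    if "r \<ge> 1" for r
  proof -
    have "(\<Sum>m<Suc r. psum N m y * psum N (r - m) y) = (\<Sum>m<r. psum N m y * psum N (r - m) y) + psum N r y * psum N 0 y"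
      by simp
    also have "(\<Sum>m<r. psum N m y * psum N (r - m) y) = psum N 0 y * psum N r y + (\<Sum>k\<in>{1..<r}. psum N k y * psum N (r - k) y)"
      using that by (simp add: lessThan_atLeast0 sum.atLeast_Suc_lessThan)
    finally show ?thesis unfolding p0 by simp
  qed
  have "Dstar N (PP N J g) y =
    (\<Sum>j\<in>J. real (g j) * (real (g j) - 1) * psum N (g j) y * PP N (J-{j}) g y
       + (\<Sum>l\<in>J-{j}. real (g j) * real (g l) * psum N (g j + g l) y * PP N (J-{j}-{l}) g y))
    + (\<Sum>j\<in>J. real (g j) * PP N (J-{j}) g y * ((\<Sum>m<Suc (g j). psum N m y * psum N (g j - m) y) - real (g j + 1) * psum N (g j) y))"
    unfolding Dstar_def Dstar_part1[OF assms(1)] Dstar_part2[OF assms] ..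
  also have "(\<Sum>j\<in>J. real (g j) * PP N (J-{j}) g y * ((\<Sum>m<Suc (g j). psum N m y * psum N (g j - m) y) - real (g j + 1) * psum N (g j) y))
     = (\<Sum>j\<in>J. real (g j) * PP N (J-{j}) g y * ((2 * real N * psum N (g j) y + (\<Sum>k\<in>{1..<g j}. psum N k y * psum N (g j - k) y)) - real (g j + 1) * psum N (g j) y))"
  proof (rule sum.cong[OF refl])
    fix j assume "j \<in> J"
    then have "g j \<ge> 1" using assms(1) by auto
    then show "real (g j) * PP N (J-{j}) g y * ((\<Sum>m<Suc (g j). psum N m y * psum N (g j - m) y) - real (g j + 1) * psum N (g j) y)
     = real (g j) * PP N (J-{j}) g y * ((2 * real N * psum N (g j) y + (\<Sum>k\<in>{1..<g j}. psum N k y * psum N (g j - k) y)) - real (g j + 1) * psum N (g j) y)"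
      by (simp only: split)
  qed
  also have "(\<Sum>j\<in>J. real (g j) * (real (g j) - 1) * psum N (g j) y * PP N (J-{j}) g y
       + (\<Sum>l\<in>J-{j}. real (g j) * real (g l) * psum N (g j + g l) y * PP N (J-{j}-{l}) g y))
    = (\<Sum>j\<in>J. real (g j) * (real (g j) - 1) * psum N (g j) y * PP N (J-{j}) g y)
       + (\<Sum>j\<in>J. \<Sum>l\<in>J-{j}. real (g j) * real (g l) * psum N (g j + g l) y * PP N (J-{j}-{l}) g y)"
    by (rule sum.distrib)
  also have "(\<Sum>j\<in>J. real (g j) * (real (g j) - 1) * psum N (g j) y * PP N (J-{j}) g y)
       + (\<Sum>j\<in>J. \<Sum>l\<in>J-{j}. real (g j) * real (g l) * psum N (g j + g l) y * PP N (J-{j}-{l}) g y)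
       + (\<Sum>j\<in>J. real (g j) * PP N (J-{j}) g y * ((2 * real N * psum N (g j) y + (\<Sum>k\<in>{1..<g j}. psum N k y * psum N (g j - k) y)) - real (g j + 1) * psum N (g j) y))
    = (\<Sum>j\<in>J. real (g j) * (real (g j) - 1) * psum N (g j) y * PP N (J-{j}) g y
        + real (g j) * PP N (J-{j}) g y * ((2 * real N * psum N (g j) y + (\<Sum>k\<in>{1..<g j}. psum N k y * psum N (g j - k) y)) - real (g j + 1) * psum N (g j) y))
       + (\<Sum>j\<in>J. \<Sum>l\<in>J-{j}. real (g j) * real (g l) * psum N (g j + g l) y * PP N (J-{j}-{l}) g y)"
    by (simp only: sum.distrib add_ac)
  also have "(\<Sum>j\<in>J. real (g j) * (real (g j) - 1) * psum N (g j) y * PP N (J-{j}) g y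
        + real (g j) * PP N (J-{j}) g y * ((2 * real N * psum N (g j) y + (\<Sum>k\<in>{1..<g j}. psum N k y * psum N (g j - k) y)) - real (g j + 1) * psum N (g j) y))
    = (\<Sum>j\<in>J. 2 * (real (g j) * (real N - 1) * psum N (g j) y * PP N (J-{j}) g y
       + real (g j) / 2 * (\<Sum>k\<in>{1..<g j}. psum N k y * psum N (g j - k) y) * PP N (J-{j}) g y))"
    by (intro sum.cong refl) (simp add: algebra_simps)
  finally have D: "Dstar N (PP N J g) y = (\<Sum>j\<in>J. 2 * (real (g j) * (real N - 1) * psum N (g j) y * PP N (J-{j}) g y
       + real (g j) / 2 * (\<Sum>k\<in>{1..<g j}. psum N k y * psum N (g j - k) y) * PP N (J-{j}) g y))
    + (\<Sum>j\<in>J. \<Sum>l\<in>J-{j}. real (g j) * real (g l) * psum N (g j + g l) y * PP N (J-{j}-{l}) g y)" .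
  have ar: "\<And>X Z::real. 1/2 * (2 * X + Z) = X + 1/2 * Z" by simp
  show ?thesis unfolding D sum_distrib_left[symmetric] by (rule ar)
qed

theorem mainTheorem8:
  fixes n N :: nat and sig :: "nat multiset" and x :: "nat \<Rightarrow> real"
  assumes "n \<ge> 1" and "N > n" and "sig \<in> partitions n"
    and "\<forall>i<N. \<forall>j<N. i \<noteq> j \<longrightarrow> x i \<noteq> x j"
  shows "(1/2) * Dstar N (ppart N sig) x
           = real n * (real N - 1) * ppart N sig x
             + (\<Sum>lam\<in>partitions n. real (A_mat n sig lam) * ppart N lam x)"
proof -
  define \<alpha> where "\<alpha> = (SOME \<alpha>. \<alpha> permutes {..<n} \<and> cycle_type n \<alpha> = sig)"
  have ex: "\<exists>\<alpha>. \<alpha> permutes {..<n} \<and> cycle_type n \<alpha> = sig" using exists_perm_aux assms(3) by blast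
  have \<alpha>: "\<alpha> permutes {..<n}" "cycle_type n \<alpha> = sig"
    using someI_ex[OF ex] unfolding \<alpha>_def by auto
  define J where "J = Orb n \<alpha>"
  define h where "h r = psum N r x" for r
  have finJ: "finite J" unfolding J_def by (rule Orb_finite)
  have fd: "\<forall>A\<in>J. finite A" "\<forall>A\<in>J. \<forall>B\<in>J. A \<noteq> B \<longrightarrow> A \<inter> B = {}"
    using Orb_fin_disj[OF \<alpha>(1) subset_refl] unfolding J_def by auto
  have pos: "\<forall>A\<in>J. card A \<ge> 1"
  proof
    fix A assume A: "A \<in> J"
    then obtain y where "A = orbit_of \<alpha> y" unfolding J_def Orb_def by auto
    then have "A \<noteq> {}" using orbit_of_self by auto
    then show "card A \<ge> 1" using A fd by (simp add: Suc_le_eq card_gt_0_iff)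
  qed
  have pp: "ppart N sig = PP N J card" unfolding PP_def J_def
    by (rule ext) (simp add: ppart_ct \<alpha>(2)[symmetric])
  have ncard: "real n = (\<Sum>A\<in>J. real (card A))"
  proof -
    have "n = card (\<Union>J)" unfolding J_def Orb_Union[OF \<alpha>(1)] by simp
    also have "\<dots> = sum card J"
      by (rule card_Union_disjoint) (use fd in \<open>auto simp: pairwise_def disjnt_def\<close>)
    finally show ?thesis by simp
  qed
  have PPrem: "PP N J card x = h (card A) * PP N (J - {A}) card x" if "A \<in> J" for A
    unfolding PP_def h_def using prod.remove[OF finJ that] by simp
  have Asum: "(\<Sum>lam\<in>partitions n. real (A_mat n sig lam) * ppart N lam x)
     = (1/2) * (\<Sum>A\<in>J. real (card A) * Gf n \<alpha> h A)"
  proof -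
    have "(\<Sum>lam\<in>partitions n. real (A_mat n sig lam) * ppart N lam x)
      = (\<Sum>lam\<in>partitions n. real (card {(a, b). a < b \<and> b < n \<and> cycle_type n (Transposition.transpose a b \<circ> \<alpha>) = lam}) * ppart N lam x)"
      unfolding A_mat_def Let_def \<alpha>_def ..
    also have "\<dots> = (\<Sum>p\<in>{(a, b). a < b \<and> b < n}. ppart N (cycle_type n (Transposition.transpose (fst p) (snd p) \<circ> \<alpha>)) x)"
      by (rule A_sum[OF \<alpha>(1)])
    also have "\<dots> = (\<Sum>p\<in>{(a, b). a < b \<and> b < n}. \<Prod>A\<in>Orb n (Transposition.transpose (fst p) (snd p) \<circ> \<alpha>). h (card A))"
      unfolding ppart_ct h_def ..
    also have "\<dots> = (1/2) * (\<Sum>A\<in>J. real (card A) * Gf n \<alpha> h A)"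
      unfolding J_def by (rule pair_sum[OF \<alpha>(1)])
    finally show ?thesis .
  qed
  have D: "(1/2) * Dstar N (PP N J card) x =
    (\<Sum>j\<in>J. real (card j) * (real N - 1) * psum N (card j) x * PP N (J-{j}) card x
       + real (card j) / 2 * (\<Sum>k\<in>{1..<card j}. psum N k x * psum N (card j - k) x) * PP N (J-{j}) card x)
    + (1/2) * (\<Sum>j\<in>J. \<Sum>l\<in>J-{j}. real (card j) * real (card l) * psum N (card j + card l) x * PP N (J-{j}-{l}) card x)"
    by (rule Dstar_PP[OF pos assms(4)])
  have G: "Gf n \<alpha> h A = (\<Sum>k\<in>{1..<card A}. psum N k x * psum N (card A - k) x) * PP N (J-{A}) card x
     + (\<Sum>l\<in>J-{A}. real (card l) * psum N (card A + card l) x * PP N (J-{A}-{l}) card x)" for A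
    unfolding Gf_def PP_def h_def J_def ..
  have N1: "real n * (real N - 1) * ppart N sig x = (\<Sum>j\<in>J. real (card j) * (real N - 1) * psum N (card j) x * PP N (J-{j}) card x)"
    unfolding pp ncard sum_distrib_right
    by (intro sum.cong refl) (simp add: PPrem h_def)
  show ?thesis
    unfolding pp D Asum G N1[unfolded pp]
    by (simp add: sum.distrib sum_subtractf sum_distrib_left sum_divide_distrib algebra_simps)
qed

end
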